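(* Let $q\ge 2$, $n\ge 1$ and $\varepsilon\in\mathbb{N}$. Let $x\in\mathbb{Z}_q^n$ be a hidden vector, and suppose the attacker has access to an oracle $\texttt{Match}_{x,\varepsilon}$ which, on a query $y\in\mathbb{Z}_q^n$, returns $1$ if $d(x,y)\le\varepsilon$ and $0$ otherwise, and additionally always reveals (regardless of the threshold) the set of error positions $\{i: x_i\neq y_i\}$, but not the values $x_i$. Then the attacker can recover $x$ using $\mathcal{O}(q)$ queries to $\texttt{Match}_{x,\varepsilon}$.
   Context: $\mathbb{Z}_q^n=\{0,\dots,q-1\}^n$ is equipped with the Hamming distance $d(x,y)=|\{i\in\{1,\dots,n\}: x_i\neq y_i\}|$. Complexity is measured as the number of oracle queries. *)

theory Defs
  imports Main
begin

definition Zqn :: "nat \<Rightarrow> nat \<Rightarrow> nat list set" where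
  "Zqn q n = {x. length x = n \<and> (\<forall>a\<in>set x. a < q)}"

definition err_pos :: "nat list \<Rightarrow> nat list \<Rightarrow> nat set" where
  "err_pos x y = {i. i < length x \<and> x ! i \<noteq> y ! i}"

definition hamming :: "nat list \<Rightarrow> nat list \<Rightarrow> nat" where
  "hamming x y = card (err_pos x y)"

type_synonym answer = "bool \<times> nat set"

definition match_oracle :: "nat list \<Rightarrow> nat \<Rightarrow> nat list \<Rightarrow> answer" where
  "match_oracle x eps y = (hamming x y \<le> eps, err_pos x y)"

text \<open>An adaptive attacker chooses each query from the history of previous
  queries and answers; run s orc k is the history after k queries.\<close>
fun run :: "((nat list \<times> answer) list \<Rightarrow> nat list) \<Rightarrow> (nat list \<Rightarrow> answer)
             \<Rightarrow> nat \<Rightarrow> (nat list \<times> answer) list" where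
  "run s orc 0 = []"
| "run s orc (Suc k) = (let h = run s orc k; y = s h in h @ [(y, orc y)])"

end

theory Submission
  imports Defs
begin

lemma run_len: "length (run (\<lambda>h. replicate n (length h)) orc k) = k"
  by (induction k) (auto simp: Let_def)

lemma run_nth: "j < k \<Longrightarrow> run (\<lambda>h. replicate n (length h)) orc k ! j
   = (replicate n j, orc (replicate n j))"
proof (induction k)
  case 0 then show ?case by simp
next
  case (Suc k)
  then show ?case
    by (cases "j < k") (auto simp: Let_def nth_append run_len less_Suc_eq)
qed

theorem theorem6:
  shows "\<exists>C::nat. \<forall>q::nat \<ge> 2. \<forall>n::nat \<ge> 1. \<forall>eps::nat.
    \<exists>k \<le> C * q. \<exists>(s :: (nat list \<times> answer) list \<Rightarrow> nat list)
                     (out :: (nat list \<times> answer) list \<Rightarrow> nat list).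
      \<forall>x \<in> Zqn q n.
        (\<forall>p \<in> set (run s (match_oracle x eps) k). fst p \<in> Zqn q n) \<and>
        out (run s (match_oracle x eps) k) = x"
proof (rule exI[of _ 1], intro allI impI)
  fix q n eps :: nat
  assume q: "q \<ge> 2" and n: "n \<ge> 1"
  define s where "s = (\<lambda>h::(nat list \<times> answer) list. replicate n (length h))"
  define out where "out = (\<lambda>h::(nat list \<times> answer) list.
     map (\<lambda>i. LEAST c. i \<notin> snd (snd (h ! c))) [0..<length (fst (h ! 0))])"
  show "\<exists>k \<le> 1 * q. \<exists>s out. \<forall>x \<in> Zqn q n.
        (\<forall>p \<in> set (run s (match_oracle x eps) k). fst p \<in> Zqn q n) \<and>
        out (run s (match_oracle x eps) k) = x"
  proof -
  have "\<forall>x \<in> Zqn q n.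
        (\<forall>p \<in> set (run s (match_oracle x eps) q). fst p \<in> Zqn q n) \<and>
        out (run s (match_oracle x eps) q) = x"
  proof
    fix x assume x: "x \<in> Zqn q n"
    let ?h = "run s (match_oracle x eps) q"
    have len: "length ?h = q" unfolding s_def by (rule run_len)
    have nth: "\<And>j. j < q \<Longrightarrow> ?h ! j = (replicate n j, match_oracle x eps (replicate n j))"
      unfolding s_def by (rule run_nth)
    have A: "\<forall>p \<in> set ?h. fst p \<in> Zqn q n"
    proof
      fix p assume "p \<in> set ?h"
      then obtain j where "j < q" "p = ?h ! j" using len by (metis in_set_conv_nth)
      then show "fst p \<in> Zqn q n" using nth by (simp add: Zqn_def)
    qed
    have lx: "length x = n" and xq: "\<And>a. a \<in> set x \<Longrightarrow> a < q" using x by (auto simp: Zqn_def)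
    have h0: "fst (?h ! 0) = replicate n 0" using nth[of 0] q by simp
    have B: "out ?h = x"
    proof (rule nth_equalityI)
      show "length (out ?h) = length x" using h0 lx by (simp add: out_def)
    next
      fix i assume "i < length (out ?h)"
      then have i: "i < n" using h0 by (simp add: out_def)
      have xi: "x ! i < q" using xq i lx by auto
      have P: "\<And>c. c < q \<Longrightarrow> (i \<notin> snd (snd (?h ! c))) = (x ! i = c)"
        using nth i lx by (auto simp: match_oracle_def err_pos_def)
      have "(LEAST c. i \<notin> snd (snd (?h ! c))) = x ! i"
      proof (rule Least_equality)
        show "i \<notin> snd (snd (?h ! (x ! i)))" using P[OF xi] by simp
      next
        fix c assume c: "i \<notin> snd (snd (?h ! c))"
        show "x ! i \<le> c"
        proof (rule ccontr)
          assume "\<not> x ! i \<le> c"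
          then have "c < q" using xi by simp
          then show False using P c \<open>\<not> x ! i \<le> c\<close> by auto
        qed
      qed
      then show "out ?h ! i = x ! i" using h0 i by (simp add: out_def)
    qed
    show "(\<forall>p \<in> set ?h. fst p \<in> Zqn q n) \<and> out ?h = x" using A B by simp
  qed
  then show ?thesis by auto
  qed
qed

end
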